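(* Assume A1, A2, A4 and A5, and let $t,r\in\mathbb N_+$. Then \[ \frac{(1-\sup_{i\in S}q_i)^r}{\mathbb E(|\boldsymbol Y_t|^r)}\le\mathbb E\Big(\frac{1}{|\boldsymbol Z_t|^r}\,\Big|\,|\boldsymbol Z_t|>0\Big), \] where $\boldsymbol Y=\boldsymbol Y^{i_0}$ is the Harris–Sevastyanov transform of $\boldsymbol Z^{i_0}$.
   Context: Setting. Type space $S=[d]$ if $d<\infty$, $S=\mathbb N_+$ if $d=\infty$. $\boldsymbol Z^{i_0}=(\boldsymbol Z^{i_0}_t)_{t\ge0}$ is a multi-type Galton–Watson process on $\mathbb N_0^d$ started from one type-$i_0$ individual: each individual of type $i$ independently produces an offspring vector with law $p_i$; $|\boldsymbol Z_t|$ is the total generation-$t$ size. Mean matrix $\boldsymbol M=(\mathbb E Z_1^{i,j})$, powers $m^{(r)}_{ij}$. A1: $\boldsymbol M$ irreducible and all $m^{(r)}_{ij}$ finite; $R$ is the common radius of convergence of $\sum_n m^{(n)}_{ij}z^n$. A2: $\sum_n m^{(n)}_{ij}R^n=\infty$ for all $i,j$; the strictly positive $\boldsymbol\nu,\boldsymbol u$ with $R\boldsymbol\nu\boldsymbol M=\boldsymbol\nu$, $R\boldsymbol M\boldsymbol u=\boldsymbol u$ satisfy $\boldsymbol u\cdot\boldsymbol\nu<\infty$ (normalised $\boldsymbol u\cdot\boldsymbol\nu=1$, $\sum\nu_i=1$); $R\in(0,1)$. $q_i$ = extinction probability from a type-$i$ root, $\boldsymbol q=(q_i)$. A4: $\sup_iq_i<1$.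 A5: $\inf_iu_i>0$. Generating functions $f^i(\boldsymbol s)=\sum_{\boldsymbol w}p_i(\boldsymbol w)\prod_js_j^{w_j}$, $\boldsymbol f=(f^i)$. Harris–Sevastyanov transform: the multi-type Galton–Watson process $\boldsymbol Y$ with $\boldsymbol Y_0=\boldsymbol Z_0$ whose offspring generating functions are $\boldsymbol F(\boldsymbol s)=(\boldsymbol f(\boldsymbol s\odot(\boldsymbol 1-\boldsymbol q)+\boldsymbol q)-\boldsymbol q)\oslash(\boldsymbol 1-\boldsymbol q)$ ($\odot,\oslash$ elementwise product/quotient). *)

theory Defs
  imports "HOL-Probability.Probability"
begin

text \<open>Types are natural numbers; the type space S is either {..<d} (d >= 1) or UNIV.
  An offspring/population vector is a function nat => nat with finite support.\<close>

definition popsize :: "(nat \<Rightarrow> nat) \<Rightarrow> nat" where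
  "popsize z = sum z {j. z j \<noteq> 0}"

definition individuals :: "(nat \<Rightarrow> nat) \<Rightarrow> nat list" where
  "individuals z = concat (map (\<lambda>j. replicate (z j) j) (sorted_list_of_set {j. z j \<noteq> 0}))"

fun offspring_sum :: "(nat \<Rightarrow> (nat \<Rightarrow> nat) pmf) \<Rightarrow> nat list \<Rightarrow> (nat \<Rightarrow> nat) pmf" where
  "offspring_sum p [] = return_pmf (\<lambda>_. 0)"
| "offspring_sum p (i # is) =
     bind_pmf (p i) (\<lambda>w. map_pmf (\<lambda>v. (\<lambda>j. w j + v j)) (offspring_sum p is))"

primrec gw :: "(nat \<Rightarrow> (nat \<Rightarrow> nat) pmf) \<Rightarrow> nat \<Rightarrow> nat \<Rightarrow> (nat \<Rightarrow> nat) pmf" where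
  "gw p i0 0 = return_pmf (\<lambda>j. if j = i0 then 1 else 0)"
| "gw p i0 (Suc t) = bind_pmf (gw p i0 t) (\<lambda>z. offspring_sum p (individuals z))"

text \<open>Extinction probability from a type-i root: P(exists t. |Z_t| = 0) = sup_t P(|Z_t| = 0).\<close>
definition ext_prob :: "(nat \<Rightarrow> (nat \<Rightarrow> nat) pmf) \<Rightarrow> nat \<Rightarrow> real" where
  "ext_prob p i = (SUP t. measure_pmf.prob (gw p i t) {z. popsize z = 0})"

definition mean_matrix :: "(nat \<Rightarrow> (nat \<Rightarrow> nat) pmf) \<Rightarrow> nat \<Rightarrow> nat \<Rightarrow> ennreal" where
  "mean_matrix p i j = (\<integral>\<^sup>+ w. of_nat (w j) \<partial>measure_pmf (p i))"

primrec mpow :: "(nat \<Rightarrow> (nat \<Rightarrow> nat) pmf) \<Rightarrow> nat set \<Rightarrow> nat \<Rightarrow> nat \<Rightarrow> nat \<Rightarrow> ennreal" where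
  "mpow p S 0 i j = (if i = j then 1 else 0)"
| "mpow p S (Suc n) i j = (\<integral>\<^sup>+ k. mpow p S n i k * mean_matrix p k j \<partial>count_space S)"

definition pgf :: "(nat \<Rightarrow> (nat \<Rightarrow> nat) pmf) \<Rightarrow> nat \<Rightarrow> (nat \<Rightarrow> real) \<Rightarrow> real" where
  "pgf p i s = measure_pmf.expectation (p i) (\<lambda>w. \<Prod>j\<in>{j. w j \<noteq> 0}. s j ^ w j)"

definition fin_vecs :: "nat set \<Rightarrow> (nat \<Rightarrow> nat) set" where
  "fin_vecs S = {w. finite {j. w j \<noteq> 0} \<and> (\<forall>j. w j \<noteq> 0 \<longrightarrow> j \<in> S)}"

end

theory Submission
  imports Defs
begin
definition mono_s :: "(nat \<Rightarrow> real) \<Rightarrow> (nat \<Rightarrow> nat) \<Rightarrow> real" where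
  "mono_s s w = (\<Prod>j\<in>{j. w j \<noteq> 0}. s j ^ w j)"

definition PG :: "(nat \<Rightarrow> nat) pmf \<Rightarrow> (nat \<Rightarrow> real) \<Rightarrow> real" where
  "PG \<mu> s = measure_pmf.expectation \<mu> (mono_s s)"

definition Gn :: "(nat \<Rightarrow> nat) pmf \<Rightarrow> (nat \<Rightarrow> real) \<Rightarrow> ennreal" where
  "Gn \<mu> s = (\<integral>\<^sup>+ w. ennreal (mono_s s w) \<partial>measure_pmf \<mu>)"

definition unit_vec :: "(nat \<Rightarrow> real) \<Rightarrow> bool" where
  "unit_vec s \<longleftrightarrow> (\<forall>j. 0 \<le> s j \<and> s j \<le> 1)"

lemma mono_s_superset:
  assumes "finite A" "{j. w j \<noteq> 0} \<subseteq> A"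
  shows "mono_s s w = (\<Prod>j\<in>A. s j ^ w j)"
  unfolding mono_s_def using assms by (intro prod.mono_neutral_left) auto

lemma mono_s_add:
  assumes "finite {j. w j \<noteq> 0}" "finite {j. v j \<noteq> 0}"
  shows "mono_s s (\<lambda>j. w j + v j) = mono_s s w * mono_s s v"
proof -
  let ?A = "{j. w j \<noteq> 0} \<union> {j. v j \<noteq> 0}"
  have "mono_s s (\<lambda>j. w j + v j) = (\<Prod>j\<in>?A. s j ^ (w j + v j))"
    using assms by (intro mono_s_superset) auto
  also have "\<dots> = (\<Prod>j\<in>?A. s j ^ w j) * (\<Prod>j\<in>?A. s j ^ v j)"
    by (simp add: power_add prod.distrib)
  also have "\<dots> = mono_s s w * mono_s s v"
    using assms by (subst (1 2) mono_s_superset[of ?A]) auto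
  finally show ?thesis .
qed

lemma mono_s_range:
  assumes "unit_vec s"
  shows "0 \<le> mono_s s w" "mono_s s w \<le> 1"
  using assms unfolding mono_s_def unit_vec_def
  by (auto intro!: prod_nonneg prod_le_1 power_le_one)

lemma mono_s_cong:
  assumes "w \<in> fin_vecs S" "\<And>j. j \<in> S \<Longrightarrow> s j = s' j"
  shows "mono_s s w = mono_s s' w"
  using assms unfolding mono_s_def fin_vecs_def by (intro prod.cong) auto

lemma mono_s_const: "mono_s (\<lambda>_. x) w = x ^ popsize w"
  unfolding mono_s_def popsize_def by (simp add: power_sum)

lemma PG_range:
  assumes "unit_vec s"
  shows "0 \<le> PG \<mu> s" "PG \<mu> s \<le> 1"
proof -
  have int: "integrable (measure_pmf \<mu>) (mono_s s)"
    by (rule measure_pmf.integrable_const_bound[where B=1]) (use mono_s_range[OF assms] in auto)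
  show "0 \<le> PG \<mu> s" unfolding PG_def
    by (rule integral_nonneg_AE) (use mono_s_range[OF assms] in auto)
  have "PG \<mu> s \<le> measure_pmf.expectation \<mu> (\<lambda>_. 1)" unfolding PG_def
    by (rule integral_mono[OF int]) (use mono_s_range[OF assms] in auto)
  then show "PG \<mu> s \<le> 1" by simp
qed

lemma Gn_PG:
  assumes "unit_vec s"
  shows "Gn \<mu> s = ennreal (PG \<mu> s)"
  unfolding Gn_def PG_def
  by (rule nn_integral_eq_integral)
     (use mono_s_range[OF assms] in \<open>auto intro!: measure_pmf.integrable_const_bound[where B=1]\<close>)


lemma fin_vecs_add: "w \<in> fin_vecs S \<Longrightarrow> v \<in> fin_vecs S \<Longrightarrow> (\<lambda>j. w j + v j) \<in> fin_vecs S"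
  unfolding fin_vecs_def
  by (auto intro: finite_subset[of _ "{j. w j \<noteq> 0} \<union> {j. v j \<noteq> 0}"])

lemma offsum_supp:
  assumes "\<forall>i\<in>S. set_pmf (p i) \<subseteq> fin_vecs S" "set is \<subseteq> S"
  shows "set_pmf (offspring_sum p is) \<subseteq> fin_vecs S"
  using assms(2)
proof (induction "is")
  case Nil then show ?case by (simp add: fin_vecs_def)
next
  case (Cons i "is")
  then show ?case using assms(1) by (auto intro!: fin_vecs_add)
qed

lemma Gn_offsum:
  assumes "\<forall>i\<in>S. set_pmf (p i) \<subseteq> fin_vecs S" "set is \<subseteq> S" "unit_vec s"
  shows "Gn (offspring_sum p is) s = prod_list (map (\<lambda>i. Gn (p i) s) is)"
  using assms(2)
proof (induction "is")
  case Nil then show ?case by (simp add: Gn_def mono_s_def)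
next
  case (Cons i "is")
  have sub: "set_pmf (offspring_sum p is) \<subseteq> fin_vecs S" using offsum_supp[OF assms(1)] Cons by auto
  have pi: "set_pmf (p i) \<subseteq> fin_vecs S" using assms(1) Cons by auto
  have "Gn (offspring_sum p (i # is)) s =
      (\<integral>\<^sup>+ w. \<integral>\<^sup>+ v. ennreal (mono_s s w) * ennreal (mono_s s v) \<partial>offspring_sum p is \<partial>p i)"
    unfolding Gn_def
    apply (simp add: map_pmf_def[symmetric])
    apply (rule nn_integral_cong_AE)
    apply (auto simp: AE_measure_pmf_iff intro!: nn_integral_cong_AE)
    using sub pi mono_s_add mono_s_range[OF assms(3)]
    by (auto simp: fin_vecs_def ennreal_mult subset_iff)
  also have "\<dots> = (\<integral>\<^sup>+ w. ennreal (mono_s s w) * Gn (offspring_sum p is) s \<partial>p i)"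
    unfolding Gn_def by (simp add: nn_integral_cmult)
  also have "\<dots> = Gn (p i) s * Gn (offspring_sum p is) s"
    unfolding Gn_def by (simp add: nn_integral_multc)
  finally show ?case using Cons by simp
qed

lemma individuals_set:
  assumes "finite {j. z j \<noteq> 0}"
  shows "set (individuals z) = {j. z j \<noteq> 0}"
  using assms unfolding individuals_def by auto

lemma prod_list_concat_map:
  fixes f :: "nat \<Rightarrow> 'a::comm_monoid_mult"
  shows "prod_list (map f (concat xss)) = prod_list (map (\<lambda>xs. prod_list (map f xs)) xss)"
  by (induction xss) auto

lemma pgf_PG: "pgf p i s = PG (p i) s"
  unfolding pgf_def PG_def mono_s_def[abs_def] ..

lemma prod_list_individuals:
  fixes f :: "nat \<Rightarrow> 'a::comm_monoid_mult"
  assumes "finite {j. z j \<noteq> 0}"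
  shows "prod_list (map f (individuals z)) = (\<Prod>j\<in>{j. z j \<noteq> 0}. f j ^ z j)"
proof -
  have "prod_list (map f (individuals z)) =
     prod_list (map (\<lambda>j. f j ^ z j) (sorted_list_of_set {j. z j \<noteq> 0}))"
    unfolding individuals_def
    by (simp add: prod_list_concat_map comp_def)
  also have "\<dots> = (\<Prod>j\<in>{j. z j \<noteq> 0}. f j ^ z j)"
    using assms by (simp add: prod.distinct_set_conv_list[symmetric])
  finally show ?thesis .
qed

lemma length_individuals:
  assumes "finite {j. z j \<noteq> 0}"
  shows "length (individuals z) = popsize z"
  using assms unfolding individuals_def popsize_def
  by (simp add: length_concat comp_def sum_list_distinct_conv_sum_set)

lemma gw_supp:
  assumes "\<forall>i\<in>S. set_pmf (p i) \<subseteq> fin_vecs S" "i0 \<in> S"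
  shows "set_pmf (gw p i0 t) \<subseteq> fin_vecs S"
proof (induction t)
  case 0 then show ?case using assms by (auto simp: fin_vecs_def)
next
  case (Suc t)
  show ?case
  proof
    fix y assume "y \<in> set_pmf (gw p i0 (Suc t))"
    then obtain z where z: "z \<in> set_pmf (gw p i0 t)" "y \<in> set_pmf (offspring_sum p (individuals z))"
      by auto
    have "set (individuals z) \<subseteq> S" using z Suc individuals_set[of z]
      by (auto simp: fin_vecs_def)
    then show "y \<in> fin_vecs S" using offsum_supp[OF assms(1)] z by auto
  qed
qed

lemma pgf_range: "unit_vec s \<Longrightarrow> unit_vec (\<lambda>j. pgf p j s)"
  using PG_range by (auto simp: unit_vec_def pgf_PG)

lemma PG_comp:
  assumes "\<forall>i\<in>S. set_pmf (p i) \<subseteq> fin_vecs S" "i0 \<in> S" "unit_vec s"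
  shows "PG (gw p i0 (Suc t)) s = PG (gw p i0 t) (\<lambda>j. pgf p j s)"
proof -
  have u: "unit_vec (\<lambda>j. pgf p j s)" using pgf_range assms(3) by auto
  have "Gn (gw p i0 (Suc t)) s = (\<integral>\<^sup>+ z. Gn (offspring_sum p (individuals z)) s \<partial>gw p i0 t)"
    unfolding Gn_def by simp
  also have "\<dots> = (\<integral>\<^sup>+ z. ennreal (mono_s (\<lambda>j. pgf p j s) z) \<partial>gw p i0 t)"
  proof (rule nn_integral_cong_AE, unfold AE_measure_pmf_iff, intro ballI)
    fix z assume z: "z \<in> set_pmf (gw p i0 t)"
    then have fz: "finite {j. z j \<noteq> 0}" and zS: "set (individuals z) \<subseteq> S"
      using gw_supp[OF assms(1,2)] individuals_set[of z] by (auto simp: fin_vecs_def)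
    have "Gn (offspring_sum p (individuals z)) s = prod_list (map (\<lambda>i. Gn (p i) s) (individuals z))"
      by (rule Gn_offsum[OF assms(1) zS assms(3)])
    also have "\<dots> = (\<Prod>j\<in>{j. z j \<noteq> 0}. Gn (p j) s ^ z j)"
      by (rule prod_list_individuals[OF fz])
    also have "\<dots> = (\<Prod>j\<in>{j. z j \<noteq> 0}. ennreal (pgf p j s ^ z j))"
      using Gn_PG[OF assms(3)] u by (auto simp: pgf_PG unit_vec_def ennreal_power intro!: prod.cong)
    also have "\<dots> = ennreal (mono_s (\<lambda>j. pgf p j s) z)"
      unfolding mono_s_def using u by (subst prod_ennreal) (auto simp: unit_vec_def)
    finally show "Gn (offspring_sum p (individuals z)) s = ennreal (mono_s (\<lambda>j. pgf p j s) z)" .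
  qed
  also have "\<dots> = Gn (gw p i0 t) (\<lambda>j. pgf p j s)" unfolding Gn_def ..
  finally have "ennreal (PG (gw p i0 (Suc t)) s) = ennreal (PG (gw p i0 t) (\<lambda>j. pgf p j s))"
    using Gn_PG assms(3) u by metis
  then show ?thesis using PG_range assms(3) u by simp
qed


lemma PG_cong:
  assumes "set_pmf \<mu> \<subseteq> fin_vecs S" "\<And>j. j \<in> S \<Longrightarrow> s j = s' j"
  shows "PG \<mu> s = PG \<mu> s'"
  unfolding PG_def
proof (rule integral_cong_AE)
  show "AE x in measure_pmf \<mu>. mono_s s x = mono_s s' x"
    unfolding AE_measure_pmf_iff
  proof
    fix w assume "w \<in> set_pmf \<mu>"
    then have "w \<in> fin_vecs S" using assms(1) by blast
    then show "mono_s s w = mono_s s' w" by (rule mono_s_cong) (rule assms(2))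
  qed
qed simp_all

lemma ext_prob_range: "0 \<le> ext_prob p i" "ext_prob p i \<le> 1"
proof -
  have bdd: "bdd_above (range (\<lambda>t. measure_pmf.prob (gw p i t) {z. popsize z = 0}))"
    by (rule bdd_aboveI[where M=1]) auto
  show "0 \<le> ext_prob p i" unfolding ext_prob_def
    by (rule cSUP_upper2[OF bdd, of 0]) auto
  show "ext_prob p i \<le> 1" unfolding ext_prob_def
    by (rule cSUP_least) auto
qed

lemma prob_ext_le: "measure_pmf.prob (gw p i t) {z. popsize z = 0} \<le> ext_prob p i"
proof -
  have bdd: "bdd_above (range (\<lambda>t. measure_pmf.prob (gw p i t) {z. popsize z = 0}))"
    by (rule bdd_aboveI[where M=1]) auto
  show ?thesis unfolding ext_prob_def by (rule cSUP_upper[OF _ bdd]) auto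
qed

lemma phi_unit:
  assumes "unit_vec s"
  shows "unit_vec (\<lambda>j. s j * (1 - ext_prob p j) + ext_prob p j)"
  unfolding unit_vec_def
proof
  fix j
  have a: "0 \<le> s j" "s j \<le> 1" using assms by (auto simp: unit_vec_def)
  have b: "0 \<le> ext_prob p j" "ext_prob p j \<le> 1" using ext_prob_range by auto
  have "s j * (1 - ext_prob p j) \<le> (1 - ext_prob p j)"
    using mult_right_mono[of "s j" 1 "1 - ext_prob p j"] a b by simp
  moreover have "0 \<le> s j * (1 - ext_prob p j)" using a b by auto
  ultimately show "0 \<le> s j * (1 - ext_prob p j) + ext_prob p j \<and>
    s j * (1 - ext_prob p j) + ext_prob p j \<le> 1" using b by linarith
qed

lemma PG_Y:
  assumes supp: "\<forall>i\<in>S. set_pmf (p i) \<subseteq> fin_vecs S"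
    and suppY: "\<forall>i\<in>S. set_pmf (pY i) \<subseteq> fin_vecs S"
    and i0: "i0 \<in> S"
    and HS: "\<forall>i\<in>S. \<forall>s. (\<forall>j. 0 \<le> s j \<and> s j \<le> 1) \<longrightarrow>
              pgf pY i s = (pgf p i (\<lambda>j. s j * (1 - ext_prob p j) + ext_prob p j) - ext_prob p i)
                           / (1 - ext_prob p i)"
    and q1: "\<forall>j\<in>S. ext_prob p j < 1"
    and s: "unit_vec s"
  shows "PG (gw pY i0 t) s =
    (PG (gw p i0 t) (\<lambda>j. s j * (1 - ext_prob p j) + ext_prob p j) - ext_prob p i0) / (1 - ext_prob p i0)"
  using s
proof (induction t arbitrary: s)
  case 0
  have e: "{j. (if j = i0 then 1 else 0 :: nat) \<noteq> 0} = {i0}" by auto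
  have "1 - ext_prob p i0 \<noteq> 0" using q1 i0 by auto
  then show ?case by (simp add: PG_def mono_s_def e field_simps)
next
  case (Suc t)
  let ?q = "ext_prob p"
  let ?\<phi> = "\<lambda>s j. s j * (1 - ?q j) + ?q j"
  let ?F = "\<lambda>j. pgf pY j s"
  have uF: "unit_vec ?F" using pgf_range Suc.prems by auto
  have "PG (gw pY i0 (Suc t)) s = PG (gw pY i0 t) ?F"
    by (rule PG_comp[OF suppY i0 Suc.prems])
  also have "\<dots> = (PG (gw p i0 t) (?\<phi> ?F) - ?q i0) / (1 - ?q i0)"
    by (rule Suc.IH[OF uF])
  also have "PG (gw p i0 t) (?\<phi> ?F) = PG (gw p i0 t) (\<lambda>j. pgf p j (?\<phi> s))"
  proof (rule PG_cong[OF gw_supp[OF supp i0]])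
    fix j assume j: "j \<in> S"
    have "1 - ?q j \<noteq> 0" using q1 j by auto
    have "pgf pY j s = (pgf p j (?\<phi> s) - ?q j) / (1 - ?q j)"
      using HS j Suc.prems unfolding unit_vec_def by blast
    then have "pgf pY j s * (1 - ?q j) = pgf p j (?\<phi> s) - ?q j"
      using \<open>1 - ?q j \<noteq> 0\<close> by simp
    then show "?\<phi> ?F j = pgf p j (?\<phi> s)" by simp
  qed
  also have "\<dots> = PG (gw p i0 (Suc t)) (?\<phi> s)"
    by (rule PG_comp[OF supp i0 phi_unit[OF Suc.prems], symmetric])
  finally show ?case .
qed

lemma pgf_sum_nat:
  fixes M :: "nat pmf" and x :: real
  assumes "0 \<le> x" "x < 1"
  shows "summable (\<lambda>k. pmf M k * x ^ k)"
    "(\<integral>\<^sup>+k. ennreal (x ^ k) \<partial>M) = ennreal (\<Sum>k. pmf M k * x ^ k)"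
proof -
  show sm: "summable (\<lambda>k. pmf M k * x ^ k)"
    by (rule summable_comparison_test[OF _ summable_geometric[of x]])
       (use assms in \<open>auto intro!: exI[of _ 0] mult_left_le_one_le simp: pmf_le_1\<close>)
  have "(\<integral>\<^sup>+k. ennreal (x ^ k) \<partial>M) = (\<Sum>k. ennreal (pmf M k * x ^ k))"
    by (simp add: nn_integral_measure_pmf nn_integral_count_space_nat ennreal_mult assms)
  also have "\<dots> = ennreal (\<Sum>k. pmf M k * x ^ k)"
    by (rule suminf_ennreal2[OF _ sm]) (use assms in auto)
  finally show "(\<integral>\<^sup>+k. ennreal (x ^ k) \<partial>M) = ennreal (\<Sum>k. pmf M k * x ^ k)" .
qed

lemma pgf_unique_nat:
  fixes M N :: "nat pmf"
  assumes eq: "\<And>x::real. 0 < x \<Longrightarrow> x < 1 \<Longrightarrow> (\<integral>\<^sup>+k. ennreal (x ^ k) \<partial>M) = (\<integral>\<^sup>+k. ennreal (x ^ k) \<partial>N)"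
  shows "M = N"
proof -
  define d where "d k = pmf M k - pmf N k" for k
  have dle: "norm (d k) \<le> 1" for k unfolding d_def
    using pmf_le_1[of M k] pmf_le_1[of N k] pmf_nonneg[of M k] pmf_nonneg[of N k]
    unfolding real_norm_def abs_le_iff by linarith
  have ds: "(\<lambda>k. d k * x ^ k) sums 0" if "0 < x" "x < 1" for x :: real
  proof -
    have "(\<Sum>k. pmf M k * x ^ k) = (\<Sum>k. pmf N k * x ^ k)"
      using eq[OF that] pgf_sum_nat[of x] that
      by (simp add: suminf_nonneg pmf_nonneg)
    then show ?thesis
      using sums_diff[OF summable_sums[OF pgf_sum_nat(1)[of x M]] summable_sums[OF pgf_sum_nat(1)[of x N]]] that
      by (simp add: d_def algebra_simps)
  qed
  have "d n = 0" for n
  proof (induction n rule: less_induct)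
    case (less n)
    define h where "h y = (\<Sum>k. d (k + n) * y ^ k)" for y :: real
    have hs: "(\<lambda>k. d (k + n) * x ^ k) sums 0" if "0 < x" "x < 1" for x :: real
    proof -
      have z: "(\<Sum>i<n. d i * x ^ i) = 0" using less by simp
      have "(\<lambda>k. d (k + n) * x ^ (k + n)) sums 0"
        by (rule iffD2[OF sums_iff_shift[of "\<lambda>k. d k * x^k" n]]) (simp add: z ds[OF that])
      then have "(\<lambda>k. (d (k + n) * x ^ k) * x ^ n) sums 0"
        by (simp add: power_add algebra_simps)
      then have "(\<lambda>k. (d (k + n) * x ^ k) * x ^ n * (1 / x ^ n)) sums (0 * (1 / x ^ n))"
        by (rule sums_mult2)
      then show ?thesis using that by simp
    qed
    have sm: "summable (\<lambda>k. d (k + n) * (1/2::real) ^ k)"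
      by (rule summable_comparison_test[OF _ summable_geometric[of "1/2::real"]])
         (use dle in \<open>auto intro!: exI[of _ 0] simp: abs_mult\<close>)
    have "isCont h 0" unfolding h_def
      by (rule isCont_powser[OF sm]) simp
    then have lim1: "(h \<longlongrightarrow> h 0) (at_right 0)"
      by (simp add: isCont_def filterlim_at_split)
    have h0: "h 0 = d n" unfolding h_def by simp
    have "eventually (\<lambda>x. h x = 0) (at_right (0::real))"
      unfolding eventually_at_right_field
      by (rule exI[of _ 1]) (auto simp: h_def sums_unique[OF hs, symmetric])
    then have lim2: "(h \<longlongrightarrow> 0) (at_right 0)"
      by (simp add: tendsto_eventually)
    have "h 0 = 0" using tendsto_unique[OF _ lim1 lim2] by simp
    then show ?case using h0 by simp
  qed
  then show ?thesis by (intro pmf_eqI) (simp add: d_def)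
qed


fun thin :: "(nat \<Rightarrow> real) \<Rightarrow> nat list \<Rightarrow> nat pmf" where
  "thin q [] = return_pmf 0"
| "thin q (i # is) = bind_pmf (bernoulli_pmf (1 - q i)) (\<lambda>b. map_pmf (\<lambda>k. (if b then 1 else 0) + k) (thin q is))"

lemma thin_pgf:
  assumes "\<forall>i\<in>set is. 0 \<le> q i \<and> q i \<le> 1" "0 \<le> x"
  shows "(\<integral>\<^sup>+k. ennreal (x ^ k) \<partial>thin q is) = prod_list (map (\<lambda>i. ennreal (x * (1 - q i) + q i)) is)"
  using assms(1)
proof (induction "is")
  case Nil then show ?case by simp
next
  case (Cons i "is")
  let ?P = "\<integral>\<^sup>+k. ennreal (x ^ k) \<partial>thin q is"
  have qi: "0 \<le> q i" "q i \<le> 1" using Cons by auto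
  have "(\<integral>\<^sup>+k. ennreal (x ^ k) \<partial>thin q (i # is)) =
     (\<integral>\<^sup>+k. ennreal (x * x ^ k) \<partial>thin q is) * ennreal (1 - q i) + ?P * ennreal (q i)"
    using qi by (simp add: map_pmf_def[symmetric])
  also have "(\<integral>\<^sup>+k. ennreal (x * x ^ k) \<partial>thin q is) = ennreal x * ?P"
    using assms(2) by (simp add: ennreal_mult nn_integral_cmult)
  also have "ennreal x * ?P * ennreal (1 - q i) + ?P * ennreal (q i) = ennreal (x * (1 - q i) + q i) * ?P"
  proof -
    have e: "ennreal (x * (1 - q i) + q i) = ennreal x * ennreal (1 - q i) + ennreal (q i)"
      using qi assms(2) by (subst ennreal_plus) (auto simp: ennreal_mult)
    show ?thesis unfolding e by (simp add: algebra_simps)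
  qed
  finally show ?case using Cons by simp
qed

lemma thin_mean:
  assumes "\<forall>i\<in>set is. 0 \<le> q i \<and> q i \<le> 1"
  shows "(\<integral>\<^sup>+k. ennreal (real k) \<partial>thin q is) = ennreal (sum_list (map (\<lambda>i. 1 - q i) is))"
  using assms
proof (induction "is")
  case Nil then show ?case by simp
next
  case (Cons i "is")
  let ?P = "\<integral>\<^sup>+k. ennreal (real k) \<partial>thin q is"
  have qi: "0 \<le> q i" "q i \<le> 1" using Cons by auto
  have sl: "0 \<le> sum_list (map (\<lambda>i. 1 - q i) is)" using Cons by (auto intro!: sum_list_nonneg)
  have "(\<integral>\<^sup>+k. ennreal (real k) \<partial>thin q (i # is)) =
     (\<integral>\<^sup>+k. 1 + ennreal (real k) \<partial>thin q is) * ennreal (1 - q i) + ?P * ennreal (q i)"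
    using qi by (simp add: map_pmf_def[symmetric] ennreal_plus)
  also have "(\<integral>\<^sup>+k. 1 + ennreal (real k) \<partial>thin q is) = 1 + ?P"
    by (simp add: nn_integral_add)
  also have "(1 + ?P) * ennreal (1 - q i) + ?P * ennreal (q i) = ennreal (1 - q i) + ?P * (ennreal (1 - q i) + ennreal (q i))"
    by (simp add: algebra_simps)
  also have "ennreal (1 - q i) + ennreal (q i) = 1"
    using qi by (simp flip: ennreal_plus)
  finally show ?case using Cons qi sl by (simp add: ennreal_plus)
qed

lemma tangent_pow:
  fixes k m :: real
  assumes "0 \<le> k" "0 \<le> m" "r \<ge> 1"
  shows "m ^ r + real r * m ^ (r - 1) * k \<le> k ^ r + real r * m ^ r"
proof -
  have eq: "k ^ r - m ^ r = (k - m) * (\<Sum>i<r. m ^ (r - Suc i) * k ^ i)"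
    by (rule power_diff_sumr2)
  have mr: "m ^ r = m ^ (r - 1) * m" using assms(3)
    by (metis One_nat_def Suc_pred less_le_trans power_Suc2 zero_less_one)
  have "real r * m ^ (r - 1) * (k - m) \<le> (k - m) * (\<Sum>i<r. m ^ (r - Suc i) * k ^ i)"
  proof (cases "m \<le> k")
    case True
    have "(\<Sum>i<r. m ^ (r - 1)) \<le> (\<Sum>i<r. m ^ (r - Suc i) * k ^ i)"
    proof (rule sum_mono)
      fix i assume "i \<in> {..<r}"
      then have "m ^ (r - 1) = m ^ (r - Suc i) * m ^ i"
        by (simp flip: power_add)
      also have "\<dots> \<le> m ^ (r - Suc i) * k ^ i"
        using True assms by (intro mult_left_mono power_mono) auto
      finally show "m ^ (r - 1) \<le> m ^ (r - Suc i) * k ^ i" .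
    qed
    then show ?thesis using True by (simp add: mult_left_mono mult.commute)
  next
    case False
    have "(\<Sum>i<r. m ^ (r - Suc i) * k ^ i) \<le> (\<Sum>i<r. m ^ (r - 1))"
    proof (rule sum_mono)
      fix i assume "i \<in> {..<r}"
      have "m ^ (r - Suc i) * k ^ i \<le> m ^ (r - Suc i) * m ^ i"
        using False assms by (intro mult_left_mono power_mono) auto
      also have "\<dots> = m ^ (r - 1)"
        using \<open>i \<in> {..<r}\<close> by (simp flip: power_add)
      finally show "m ^ (r - Suc i) * k ^ i \<le> m ^ (r - 1)" .
    qed
    then have "(k - m) * (\<Sum>i<r. m ^ (r - 1)) \<le> (k - m) * (\<Sum>i<r. m ^ (r - Suc i) * k ^ i)"
      using False by (intro mult_left_mono_neg) auto
    then show ?thesis by (simp add: mult.commute mult.left_commute)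
  qed
  then have "real r * m ^ (r - 1) * (k - m) \<le> k ^ r - m ^ r" using eq by simp
  then show ?thesis using mr by (simp add: algebra_simps)
qed

lemma jensen_pow:
  fixes M :: "nat pmf"
  assumes mean: "(\<integral>\<^sup>+k. ennreal (real k) \<partial>M) = ennreal m" and m: "0 \<le> m" and r: "r \<ge> 1"
  shows "ennreal (m ^ r) \<le> (\<integral>\<^sup>+k. ennreal (real k ^ r) \<partial>M)"
proof -
  have mr: "m ^ (r - 1) * m = m ^ r" "m ^ (r - Suc 0) * m = m ^ r" using r
    by (metis One_nat_def Suc_pred less_le_trans power_Suc2 zero_less_one)+
  have "(\<integral>\<^sup>+k. ennreal (m ^ r) + ennreal (real r * m ^ (r - 1)) * ennreal (real k) \<partial>M) =
     (\<integral>\<^sup>+k. ennreal (m ^ r) \<partial>M) + (\<integral>\<^sup>+k. ennreal (real r * m ^ (r - 1)) * ennreal (real k) \<partial>M)"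
    by (rule nn_integral_add) auto
  also have "(\<integral>\<^sup>+k. ennreal (real r * m ^ (r - 1)) * ennreal (real k) \<partial>M) = ennreal (real r * m ^ (r - 1)) * ennreal m"
    by (subst nn_integral_cmult) (simp_all add: mean)
  also have "ennreal (real r * m ^ (r - 1)) * ennreal m = ennreal (real r * m ^ r)"
    using m by (simp add: mr mult.assoc flip: ennreal_mult)
  finally have "ennreal (m ^ r) + ennreal (real r * m ^ r) =
      (\<integral>\<^sup>+k. ennreal (m ^ r) + ennreal (real r * m ^ (r - 1)) * ennreal (real k) \<partial>M)"
    by simp
  also have "\<dots> \<le> (\<integral>\<^sup>+k. ennreal (real k ^ r) + ennreal (real r * m ^ r) \<partial>M)"
  proof (rule nn_integral_mono)
    fix k :: nat
    have "ennreal (m ^ r) + ennreal (real r * m ^ (r - 1)) * ennreal (real k) =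
        ennreal (m ^ r + real r * m ^ (r - 1) * real k)"
      using m by (simp add: ennreal_plus ennreal_mult)
    also have "\<dots> \<le> ennreal (real k ^ r + real r * m ^ r)"
      using tangent_pow[of "real k" m r] m r by (intro ennreal_leI) auto
    also have "\<dots> = ennreal (real k ^ r) + ennreal (real r * m ^ r)"
      using m by (simp add: ennreal_plus)
    finally show "ennreal (m ^ r) + ennreal (real r * m ^ (r - 1)) * ennreal (real k)
        \<le> ennreal (real k ^ r) + ennreal (real r * m ^ r)" .
  qed
  also have "\<dots> = (\<integral>\<^sup>+k. ennreal (real k ^ r) \<partial>M) + ennreal (real r * m ^ r)"
    by (simp add: nn_integral_add)
  finally have "ennreal (real r * m ^ r) + ennreal (m ^ r) \<le> ennreal (real r * m ^ r) + (\<integral>\<^sup>+k. ennreal (real k ^ r) \<partial>M)"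
    by (simp add: add.commute)
  then show ?thesis by (simp add: ennreal_add_left_cancel_le)
qed


lemma final_ineq:
  fixes Z :: "(nat \<Rightarrow> nat) pmf" and EY :: ennreal and c q0 :: real and r :: nat
  assumes K: "ennreal c * (\<integral>\<^sup>+ z. ennreal (real (popsize z) ^ r) \<partial>Z) \<le> EY * ennreal (1 - q0)"
    and c: "0 < c" and P: "1 - q0 \<le> measure_pmf.prob Z {z. popsize z > 0}" and q0: "q0 < 1"
    and r: "r \<ge> 1"
  shows "ennreal c / EY \<le> ennreal (measure_pmf.expectation Z
            (\<lambda>z. if popsize z > 0 then 1 / real (popsize z) ^ r else 0)
            / measure_pmf.prob Z {z. popsize z > 0})"
proof (cases "EY = \<infinity>")
  case True then show ?thesis by simp
next
  case False
  let ?P = "measure_pmf.prob Z {z. popsize z > 0}"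
  let ?B = "measure_pmf.expectation Z (\<lambda>z. if popsize z > 0 then 1 / real (popsize z) ^ r else 0)"
  let ?A = "\<integral>\<^sup>+ z. ennreal (real (popsize z) ^ r) \<partial>Z"
  obtain e where e: "EY = ennreal e" "0 \<le> e" using False by (cases EY) auto
  have Ppos: "0 < ?P" using P q0 by linarith
  have Ple1: "?P \<le> 1" by simp
  have EYq: "EY * ennreal (1 - q0) = ennreal (e * (1 - q0))" using e q0 by (simp add: ennreal_mult)
  have "EY * ennreal (1 - q0) < \<infinity>" unfolding EYq by simp
  then have "ennreal c * ?A < \<infinity>" by (rule le_less_trans[OF K])
  then have "?A \<noteq> \<infinity>" using c by (auto simp: ennreal_mult_less_top)
  then obtain a where a: "?A = ennreal a" "0 \<le> a" by (cases ?A) auto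
  have "ennreal (c * a) = ennreal c * ?A" using a c by (simp add: ennreal_mult)
  then have "ennreal (c * a) \<le> ennreal (e * (1 - q0))" using K EYq by simp
  then have ca: "c * a \<le> e * (1 - q0)" using ennreal_le_iff[of "e * (1 - q0)" "c * a"] e q0 by simp
  have "ennreal ?P = (\<integral>\<^sup>+ z. indicator {z. popsize z > 0} z \<partial>Z)"
    using nn_integral_indicator[of "{z. popsize z > 0}" "measure_pmf Z"]
      measure_pmf.emeasure_eq_measure[of Z "{z. popsize z > 0}"] by simp
  also have "\<dots> \<le> ?A"
  proof (rule nn_integral_mono)
    fix z
    show "indicator {z. popsize z > 0} z \<le> ennreal (real (popsize z) ^ r)"
    proof (cases "popsize z > 0")
      case True
      have "1 \<le> real (popsize z) ^ r" using True by (intro one_le_power) simp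
      then show ?thesis using True by (simp add: indicator_def)
    qed (simp add: indicator_def)
  qed
  finally have "ennreal ?P \<le> ennreal a" using a(1) by simp
  then have Pa: "?P \<le> a" using ennreal_le_iff[OF a(2)] by blast
  have apos: "0 < a" using Pa Ppos by linarith
  have epos: "0 < e"
  proof -
    have "0 < c * a" using c apos by simp
    then have "0 < e * (1 - q0)" using ca by linarith
    then show ?thesis using e q0 by (simp add: zero_less_mult_iff)
  qed
  have lhs: "ennreal c / EY = ennreal (c / e)" using e c epos by (simp add: divide_ennreal)
  have "e * (1 - q0) \<le> e * ?P" using P epos by (intro mult_left_mono) auto
  then have "c * a \<le> e * ?P" using ca by linarith
  then have s1: "c / e \<le> ?P / a" using epos apos by (simp add: divide_simps mult.commute)
  have intA: "integrable Z (\<lambda>z. real (popsize z) ^ r)"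
    by (rule integrableI_nn_integral_finite[OF _ _ a(1)]) simp_all
  have Aint: "measure_pmf.expectation Z (\<lambda>z. real (popsize z) ^ r) = a"
  proof -
    have "measure_pmf.expectation Z (\<lambda>z. real (popsize z) ^ r) = enn2real ?A"
      by (rule integral_eq_nn_integral) simp_all
    then show ?thesis using a by simp
  qed
  define \<gamma> where "\<gamma> = a / ?P"
  have gpos: "0 < \<gamma>" using apos Ppos by (simp add: \<gamma>_def)
  have intI: "integrable Z (\<lambda>z. indicator {z. popsize z > 0} z :: real)"
    by (rule measure_pmf.integrable_const_bound[where B=1]) auto
  have intB: "integrable Z (\<lambda>z. if popsize z > 0 then 1 / real (popsize z) ^ r else 0)"
    by (rule measure_pmf.integrable_const_bound[where B=1]) auto
  have pw: "(2 / \<gamma>) * indicator {z. popsize z > 0} z - (1 / \<gamma>^2) * real (popsize z) ^ r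
      \<le> (if popsize z > 0 then 1 / real (popsize z) ^ r else 0)" for z
  proof (cases "popsize z > 0")
    case True
    define k where "k = real (popsize z) ^ r"
    have k1: "1 \<le> k" unfolding k_def using True by (intro one_le_power) auto
    have "(2 / \<gamma>) - (1 / \<gamma>^2) * k \<le> 1 / k"
    proof -
      have "0 \<le> (\<gamma> - k)^2" by simp
      then have "2 * \<gamma> * k - k * k \<le> \<gamma> * \<gamma>" by (simp add: power2_eq_square algebra_simps)
      then show ?thesis using gpos k1 by (simp add: divide_simps power2_eq_square) (simp add: algebra_simps)
    qed
    then show ?thesis using True by (simp add: k_def)
  next
    case False
    then show ?thesis using r by simp
  qed
  have "(2 / \<gamma>) * ?P - (1 / \<gamma>^2) * a =
      measure_pmf.expectation Z (\<lambda>z. (2 / \<gamma>) * indicator {z. popsize z > 0} z - (1 / \<gamma>^2) * real (popsize z) ^ r)"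
    using intA intI Aint by (simp add: Bochner_Integration.integral_diff)
  also have "\<dots> \<le> ?B"
    by (rule integral_mono[OF Bochner_Integration.integrable_diff[OF integrable_mult_right[OF intI] integrable_mult_right[OF intA]] intB pw])
  finally have "(2 / \<gamma>) * ?P - (1 / \<gamma>^2) * a \<le> ?B" .
  moreover have "(2 / \<gamma>) * ?P - (1 / \<gamma>^2) * a = ?P * ?P / a"
    using apos Ppos by (simp add: \<gamma>_def field_simps power2_eq_square)
  ultimately have "?P * ?P / a \<le> ?B" by simp
  then have s2: "?P / a \<le> ?B / ?P" using Ppos apos by (simp add: divide_simps mult.commute)
  show ?thesis unfolding lhs using s1 s2 by (intro ennreal_leI) linarith
qed


lemma sum_list_lb:
  fixes f :: "nat \<Rightarrow> real"
  shows "(\<forall>i\<in>set xs. c \<le> f i) \<Longrightarrow> c * real (length xs) \<le> sum_list (map f xs)"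
  by (induction xs) (auto simp: algebra_simps)

theorem mainTheorem13:
  fixes S :: "nat set" and p pY :: "nat \<Rightarrow> (nat \<Rightarrow> nat) pmf"
    and i0 t r :: nat and R :: real and \<nu> u :: "nat \<Rightarrow> real"
  assumes S: "S = UNIV \<or> (\<exists>d\<ge>1. S = {..<d})"
    and i0: "i0 \<in> S"
    and supp: "\<forall>i\<in>S. set_pmf (p i) \<subseteq> fin_vecs S"
    \<comment> \<open>A1\<close>
    and irred: "\<forall>i\<in>S. \<forall>j\<in>S. \<exists>n\<ge>1. mpow p S n i j > 0"
    and fin_mom: "\<forall>n. \<forall>i\<in>S. \<forall>j\<in>S. mpow p S n i j < \<infinity>"
    and R_def: "\<forall>i\<in>S. \<forall>j\<in>S. conv_radius (\<lambda>n. enn2real (mpow p S n i j)) = ereal R"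
    \<comment> \<open>A2\<close>
    and R_rec: "\<forall>i\<in>S. \<forall>j\<in>S. (\<Sum>n. mpow p S n i j * ennreal R ^ n) = \<infinity>"
    and \<nu>_pos: "\<forall>i\<in>S. \<nu> i > 0" and u_pos: "\<forall>i\<in>S. u i > 0"
    and \<nu>_eig: "\<forall>j\<in>S. ennreal R * (\<integral>\<^sup>+ i. ennreal (\<nu> i) * mean_matrix p i j \<partial>count_space S) = ennreal (\<nu> j)"
    and u_eig: "\<forall>i\<in>S. ennreal R * (\<integral>\<^sup>+ j. mean_matrix p i j * ennreal (u j) \<partial>count_space S) = ennreal (u i)"
    and u\<nu>: "(\<integral>\<^sup>+ i. ennreal (u i * \<nu> i) \<partial>count_space S) = 1"
    and \<nu>_sum: "(\<integral>\<^sup>+ i. ennreal (\<nu> i) \<partial>count_space S) = 1"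
    and R01: "0 < R" "R < 1"
    \<comment> \<open>A4\<close>
    and A4: "Sup (ext_prob p ` S) < 1"
    \<comment> \<open>A5\<close>
    and A5: "\<exists>c>0. \<forall>i\<in>S. u i \<ge> c"
    \<comment> \<open>Harris--Sevastyanov transform: offspring laws pY with generating functions F\<close>
    and suppY: "\<forall>i\<in>S. set_pmf (pY i) \<subseteq> fin_vecs S"
    and HS: "\<forall>i\<in>S. \<forall>s. (\<forall>j. 0 \<le> s j \<and> s j \<le> 1) \<longrightarrow>
              pgf pY i s = (pgf p i (\<lambda>j. s j * (1 - ext_prob p j) + ext_prob p j) - ext_prob p i)
                           / (1 - ext_prob p i)"
    and t: "t \<ge> 1" and r: "r \<ge> 1"
  shows "ennreal ((1 - Sup (ext_prob p ` S)) ^ r)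
           / (\<integral>\<^sup>+ y. ennreal (real (popsize y) ^ r) \<partial>measure_pmf (gw pY i0 t))
         \<le> ennreal (measure_pmf.expectation (gw p i0 t)
                (\<lambda>z. if popsize z > 0 then 1 / real (popsize z) ^ r else 0)
              / measure_pmf.prob (gw p i0 t) {z. popsize z > 0})"
proof -
  let ?q = "ext_prob p"
  let ?qs = "Sup (ext_prob p ` S)"
  let ?qz = "ext_prob p i0"
  define Z where "Z = gw p i0 t"
  define Y where "Y = gw pY i0 t"
  define \<nu>' where "\<nu>' = bind_pmf Z (\<lambda>z. thin (ext_prob p) (individuals z))"
  define Mx where "Mx = bind_pmf (bernoulli_pmf (1 - ext_prob p i0)) (\<lambda>b. if b then map_pmf popsize Y else return_pmf 0)"
  have rq: "0 \<le> ?q i \<and> ?q i \<le> 1" for i using ext_prob_range by auto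
  have bdd: "bdd_above (?q ` S)" by (rule bdd_aboveI2[where M=1]) (use rq in auto)
  have qle: "?q j \<le> ?qs" if "j \<in> S" for j using cSup_upper[OF _ bdd] that by auto
  have q1: "\<forall>j\<in>S. ?q j < 1" using qle A4 by (meson le_less_trans)
  have q01: "?qz < 1" using q1 i0 by auto
  have qs0: "0 \<le> ?qs" using qle[OF i0] rq[of i0] by linarith
  have ZS: "set_pmf Z \<subseteq> fin_vecs S" unfolding Z_def by (rule gw_supp[OF supp i0])
  have indS: "set (individuals z) \<subseteq> S" "finite {j. z j \<noteq> 0}" if "z \<in> set_pmf Z" for z
    using ZS that individuals_set[of z] by (auto simp: fin_vecs_def)
  have pgf\<nu>: "(\<integral>\<^sup>+k. ennreal (x ^ k) \<partial>\<nu>') = ennreal (PG Z (\<lambda>j. x * (1 - ?q j) + ?q j))"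
    if x: "0 \<le> x" "x \<le> 1" for x :: real
  proof -
    have ux: "unit_vec (\<lambda>_. x)" using x by (simp add: unit_vec_def)
    have "(\<integral>\<^sup>+k. ennreal (x ^ k) \<partial>\<nu>') = (\<integral>\<^sup>+z. \<integral>\<^sup>+k. ennreal (x ^ k) \<partial>thin ?q (individuals z) \<partial>Z)"
      unfolding \<nu>'_def by simp
    also have "\<dots> = (\<integral>\<^sup>+z. ennreal (mono_s (\<lambda>j. x * (1 - ?q j) + ?q j) z) \<partial>Z)"
    proof (rule nn_integral_cong_AE, unfold AE_measure_pmf_iff, intro ballI)
      fix z assume z: "z \<in> set_pmf Z"
      have "(\<integral>\<^sup>+k. ennreal (x ^ k) \<partial>thin ?q (individuals z)) =
          prod_list (map (\<lambda>i. ennreal (x * (1 - ?q i) + ?q i)) (individuals z))"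
        by (rule thin_pgf) (use rq x in auto)
      also have "\<dots> = (\<Prod>j\<in>{j. z j \<noteq> 0}. ennreal (x * (1 - ?q j) + ?q j) ^ z j)"
        by (rule prod_list_individuals[OF indS(2)[OF z]])
      also have "\<dots> = ennreal (mono_s (\<lambda>j. x * (1 - ?q j) + ?q j) z)"
        unfolding mono_s_def using rq x
        by (subst prod_ennreal[symmetric]) (auto simp del: ennreal_plus simp add: ennreal_power intro!: prod.cong)
      finally show "(\<integral>\<^sup>+k. ennreal (x ^ k) \<partial>thin ?q (individuals z)) =
          ennreal (mono_s (\<lambda>j. x * (1 - ?q j) + ?q j) z)" .
    qed
    also have "\<dots> = ennreal (PG Z (\<lambda>j. x * (1 - ?q j) + ?q j))"
      using Gn_PG[OF phi_unit[OF ux, of p]] unfolding Gn_def by simp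
    finally show ?thesis .
  qed
  have pgfM: "(\<integral>\<^sup>+k. ennreal (x ^ k) \<partial>Mx) = ennreal (PG Z (\<lambda>j. x * (1 - ?q j) + ?q j))"
    if x: "0 \<le> x" "x \<le> 1" for x :: real
  proof -
    have ux: "unit_vec (\<lambda>_. x)" using x by (simp add: unit_vec_def)
    have GY: "(\<integral>\<^sup>+y. ennreal (x ^ popsize y) \<partial>Y) = ennreal (PG Y (\<lambda>_. x))"
      using Gn_PG[OF ux, of Y] unfolding Gn_def mono_s_const .
    have PY: "PG Y (\<lambda>_. x) = (PG Z (\<lambda>j. x * (1 - ?q j) + ?q j) - ?qz) / (1 - ?qz)"
      unfolding Y_def Z_def using PG_Y[OF supp suppY i0 HS q1 ux] by simp
    have PY0: "0 \<le> PG Y (\<lambda>_. x)" using PG_range[OF ux] by simp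
    have "(\<integral>\<^sup>+k. ennreal (x ^ k) \<partial>Mx) = ennreal (PG Y (\<lambda>_. x)) * ennreal (1 - ?qz) + ennreal (?qz)"
      unfolding Mx_def using rq[of i0] q01 GY by (simp add: map_pmf_def[symmetric])
    also have "\<dots> = ennreal (PG Y (\<lambda>_. x) * (1 - ?qz) + ?qz)"
      using PY0 q01 rq[of i0] by (simp add: ennreal_plus ennreal_mult)
    also have "PG Y (\<lambda>_. x) * (1 - ?qz) + ?qz = PG Z (\<lambda>j. x * (1 - ?q j) + ?q j)"
      using PY q01 by simp
    finally show ?thesis .
  qed
  have eqM: "Mx = \<nu>'"
    by (rule pgf_unique_nat) (simp add: pgf\<nu> pgfM)
  let ?EY = "\<integral>\<^sup>+ y. ennreal (real (popsize y) ^ r) \<partial>Y"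
  let ?A = "\<integral>\<^sup>+ z. ennreal (real (popsize z) ^ r) \<partial>Z"
  have r0: "0 < r" using r by simp
  have MxR: "(\<integral>\<^sup>+k. ennreal (real k ^ r) \<partial>Mx) = ?EY * ennreal (1 - ?qz)"
    unfolding Mx_def using rq[of i0] q01 r0 by (simp add: map_pmf_def[symmetric])
  have "ennreal ((1 - ?qs) ^ r) * ?A = (\<integral>\<^sup>+z. ennreal ((1 - ?qs) ^ r) * ennreal (real (popsize z) ^ r) \<partial>Z)"
    by (simp add: nn_integral_cmult)
  also have "\<dots> \<le> (\<integral>\<^sup>+z. \<integral>\<^sup>+k. ennreal (real k ^ r) \<partial>thin ?q (individuals z) \<partial>Z)"
  proof (rule nn_integral_mono_AE, unfold AE_measure_pmf_iff, intro ballI)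
    fix z assume z: "z \<in> set_pmf Z"
    define m where "m = sum_list (map (\<lambda>i. 1 - ?q i) (individuals z))"
    have m0: "(1 - ?qs) * real (popsize z) \<le> m"
      unfolding m_def length_individuals[OF indS(2)[OF z], symmetric]
      by (rule sum_list_lb) (use indS(1)[OF z] qle in auto)
    have mean: "(\<integral>\<^sup>+k. ennreal (real k) \<partial>thin ?q (individuals z)) = ennreal m"
      unfolding m_def by (rule thin_mean) (use rq in auto)
    have "0 \<le> (1 - ?qs) * real (popsize z)" using A4 by simp
    then have mpos: "0 \<le> m" using m0 by linarith
    have "ennreal ((1 - ?qs) ^ r) * ennreal (real (popsize z) ^ r) = ennreal (((1 - ?qs) * real (popsize z)) ^ r)"
      using A4 by (simp add: ennreal_mult[symmetric] power_mult_distrib)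
    also have "\<dots> \<le> ennreal (m ^ r)"
      using m0 \<open>0 \<le> (1 - ?qs) * real (popsize z)\<close> by (intro ennreal_leI power_mono) auto
    also have "\<dots> \<le> (\<integral>\<^sup>+k. ennreal (real k ^ r) \<partial>thin ?q (individuals z))"
      by (rule jensen_pow[OF mean mpos r])
    finally show "ennreal ((1 - ?qs) ^ r) * ennreal (real (popsize z) ^ r)
        \<le> (\<integral>\<^sup>+k. ennreal (real k ^ r) \<partial>thin ?q (individuals z))" .
  qed
  also have "\<dots> = (\<integral>\<^sup>+k. ennreal (real k ^ r) \<partial>\<nu>')"
    unfolding \<nu>'_def by simp
  also have "\<dots> = ?EY * ennreal (1 - ?qz)"
    using MxR eqM by simp
  finally have K: "ennreal ((1 - ?qs) ^ r) * ?A \<le> ?EY * ennreal (1 - ?qz)" .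
  have P: "1 - ?qz \<le> measure_pmf.prob Z {z. popsize z > 0}"
  proof -
    have "{z. popsize z > 0} = space (measure_pmf Z) - {z. popsize z = 0}" by auto
    then have "measure_pmf.prob Z {z. popsize z > 0} = 1 - measure_pmf.prob Z {z. popsize z = 0}"
      using measure_pmf.prob_compl[of "{z. popsize z = 0}" Z] by simp
    moreover have "measure_pmf.prob Z {z. popsize z = 0} \<le> ?qz"
      unfolding Z_def by (rule prob_ext_le)
    ultimately show ?thesis by linarith
  qed
  have c: "0 < (1 - ?qs) ^ r" using A4 by simp
  show ?thesis
    using final_ineq[OF K c P q01 r] unfolding Y_def Z_def .
qed

end
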